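(* Let $n\ge 1$ and let the braid group $B_{n+1}$, with standard generators $\sigma_1,\dotsc,\sigma_n$, act on $(\mathbb{C}/\pi\mathbb{Z})^{n+1}$ by \[ \sigma_i:\ \phi_i\mapsto 2\phi_i-\phi_{i+1},\qquad \phi_{i+1}\mapsto\phi_i,\qquad \phi_j\mapsto\phi_j\ (j\ne i,i+1). \] Then the orbit of a point $(\phi_1,\dotsc,\phi_{n+1})\in(\mathbb{C}/\pi\mathbb{Z})^{n+1}$ under this action is finite if and only if $\phi_i-\phi_{i+1}\in\pi\mathbb{Q}$ (modulo $\pi\mathbb{Z}$) for every $i=1,\dotsc,n$.
   Context: The formulas have integer coefficients, so they are well defined on $(\mathbb{C}/\pi\mathbb{Z})^{n+1}$; the condition $\phi_i-\phi_{i+1}\in\pi\mathbb{Q}$ means that some (equivalently every) representative of $\phi_i-\phi_{i+1}\in\mathbb{C}/\pi\mathbb{Z}$ lies in $\pi\mathbb{Q}$. *)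

theory Defs
  imports Complex_Main
begin

text \<open>Points of (C/pi Z)^(n+1) are represented by functions phi :: nat => complex,
  coordinates indexed 1..n+1 (values at other indices are irrelevant).\<close>

definition braid_sigma :: "nat \<Rightarrow> (nat \<Rightarrow> complex) \<Rightarrow> (nat \<Rightarrow> complex)" where
  "braid_sigma i \<phi> = \<phi>(i := 2 * \<phi> i - \<phi> (Suc i), Suc i := \<phi> i)"

definition braid_sigma_inv :: "nat \<Rightarrow> (nat \<Rightarrow> complex) \<Rightarrow> (nat \<Rightarrow> complex)" where
  "braid_sigma_inv i \<phi> = \<phi>(i := \<phi> (Suc i), Suc i := 2 * \<phi> (Suc i) - \<phi> i)"

inductive_set braid_orbit :: "nat \<Rightarrow> (nat \<Rightarrow> complex) \<Rightarrow> (nat \<Rightarrow> complex) set"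
  for n :: nat and \<phi> :: "nat \<Rightarrow> complex" where
  base: "\<phi> \<in> braid_orbit n \<phi>"
| sig: "\<psi> \<in> braid_orbit n \<phi> \<Longrightarrow> 1 \<le> i \<Longrightarrow> i \<le> n \<Longrightarrow> braid_sigma i \<psi> \<in> braid_orbit n \<phi>"
| sig_inv: "\<psi> \<in> braid_orbit n \<phi> \<Longrightarrow> 1 \<le> i \<Longrightarrow> i \<le> n \<Longrightarrow> braid_sigma_inv i \<psi> \<in> braid_orbit n \<phi>"

definition class_mod_pi :: "complex \<Rightarrow> complex set" where
  "class_mod_pi z = {w. \<exists>k::int. z - w = complex_of_real pi * of_int k}"

definition point_mod_pi :: "nat \<Rightarrow> (nat \<Rightarrow> complex) \<Rightarrow> (nat \<Rightarrow> complex set)" where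
  "point_mod_pi n \<phi> = (\<lambda>i. if 1 \<le> i \<and> i \<le> Suc n then class_mod_pi (\<phi> i) else {})"

end

theory Submission
  imports Defs
begin

lemma class_eq:
  assumes "a - b = complex_of_real pi * of_int k"
  shows "class_mod_pi a = class_mod_pi b"
proof -
  have "\<exists>k'::int. b - w = complex_of_real pi * of_int k'" if "a - w = complex_of_real pi * of_int k'" for w k'
    using that assms by (intro exI[of _ "k' - k"]) (auto simp: algebra_simps)
  moreover have "\<exists>k'::int. a - w = complex_of_real pi * of_int k'" if "b - w = complex_of_real pi * of_int k'" for w k'
  proof (intro exI[of _ "k' + k"])
    have "a - w = (a - b) + (b - w)" by simp
    then show "a - w = complex_of_real pi * of_int (k' + k)" using that assms by (simp add: algebra_simps)
  qed
  ultimately show ?thesis unfolding class_mod_pi_def by blast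
qed

lemma class_mem:
  assumes "class_mod_pi a = class_mod_pi b"
  shows "\<exists>k::int. a - b = complex_of_real pi * of_int k"
proof -
  have "b \<in> class_mod_pi b" unfolding class_mod_pi_def by (auto intro: exI[of _ 0])
  then have "b \<in> class_mod_pi a" using assms by simp
  then show ?thesis unfolding class_mod_pi_def by auto
qed

lemma iter:
  "(braid_sigma i ^^ k) \<phi> i = \<phi> i + of_nat k * (\<phi> i - \<phi> (Suc i)) \<and>
   (braid_sigma i ^^ k) \<phi> i - (braid_sigma i ^^ k) \<phi> (Suc i) = \<phi> i - \<phi> (Suc i)"
proof (induction k)
  case 0 then show ?case by simp
next
  case (Suc k)
  define \<psi> where "\<psi> = (braid_sigma i ^^ k) \<phi>"
  have e: "(braid_sigma i ^^ Suc k) \<phi> = braid_sigma i \<psi>" by (simp add: \<psi>_def)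
  have a: "braid_sigma i \<psi> i = 2 * \<psi> i - \<psi> (Suc i)" "braid_sigma i \<psi> (Suc i) = \<psi> i"
    by (simp_all add: braid_sigma_def)
  from Suc.IH have h: "\<psi> i = \<phi> i + of_nat k * (\<phi> i - \<phi> (Suc i))" "\<psi> i - \<psi> (Suc i) = \<phi> i - \<phi> (Suc i)"
    unfolding \<psi>_def by blast+
  have h2: "\<psi> (Suc i) = \<psi> i - (\<phi> i - \<phi> (Suc i))" using h(2) by (simp add: algebra_simps)
  show ?case unfolding e a h2 using h(1) by (simp add: algebra_simps)
qed

lemma iter_orbit: "1 \<le> i \<Longrightarrow> i \<le> n \<Longrightarrow> (braid_sigma i ^^ k) \<phi> \<in> braid_orbit n \<phi>"
  by (induction k) (auto intro: braid_orbit.intros)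

lemma forward:
  assumes fin: "finite (point_mod_pi n ` braid_orbit n \<phi>)" and i: "1 \<le> i" "i \<le> n"
  shows "\<exists>q::rat. \<phi> i - \<phi> (Suc i) = complex_of_real pi * of_rat q"
proof -
  define d where "d = \<phi> i - \<phi> (Suc i)"
  define f where "f k = class_mod_pi (\<phi> i + of_nat k * d)" for k
  have "range f \<subseteq> (\<lambda>g. g i) ` point_mod_pi n ` braid_orbit n \<phi>"
  proof
    fix x assume "x \<in> range f"
    then obtain k where k: "x = f k" by auto
    have "point_mod_pi n ((braid_sigma i ^^ k) \<phi>) i = x"
      using i iter[where i=i and k=k and \<phi>=\<phi>] unfolding point_mod_pi_def k f_def d_def by simp
    then show "x \<in> (\<lambda>g. g i) ` point_mod_pi n ` braid_orbit n \<phi>"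
      using iter_orbit[OF i, of k \<phi>] by force
  qed
  then have "finite (range f)" using fin finite_subset by blast
  then have "\<not> inj f" using finite_imageD infinite_UNIV_nat by blast
  then obtain k1 k2 where kk: "k1 \<noteq> k2" "f k1 = f k2" unfolding inj_def by blast
  then obtain m :: int where m: "(\<phi> i + of_nat k1 * d) - (\<phi> i + of_nat k2 * d) = complex_of_real pi * of_int m"
    using class_mem unfolding f_def by blast
  define r where "r = int k1 - int k2"
  have r0: "r \<noteq> 0" using kk r_def by simp
  have "of_int r * d = complex_of_real pi * of_int m"
    using m unfolding r_def by (simp add: algebra_simps)
  then have "d = complex_of_real pi * (of_int m / of_int r)"
    using r0 by (simp add: field_simps)
  moreover have "(of_rat (of_int m / of_int r :: rat) :: complex) = of_int m / of_int r"
    by (simp add: of_rat_divide)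
  ultimately show ?thesis unfolding d_def by metis
qed


lemma comb2:
  fixes c :: complex and N :: int
  assumes "a = c + complex_of_real pi * of_int m1 / of_int N" "b = c + complex_of_real pi * of_int m2 / of_int N"
  shows "2 * a - b = c + complex_of_real pi * of_int (2 * m1 - m2) / of_int N"
  using assms by (simp add: algebra_simps add_divide_distrib diff_divide_distrib)

lemma comb_sub:
  fixes c :: complex and N :: int
  assumes "a = c + complex_of_real pi * of_int m1 / of_int N" "a - b = complex_of_real pi * of_int m2 / of_int N"
  shows "b = c + complex_of_real pi * of_int (m1 - m2) / of_int N"
proof -
  have "b = a - (a - b)" by simp
  then show ?thesis using assms by (simp add: algebra_simps add_divide_distrib diff_divide_distrib)
qed

lemma backward:
  assumes H: "\<forall>i\<in>{1..n}. \<exists>q::rat. \<phi> i - \<phi> (Suc i) = complex_of_real pi * of_rat q"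
  shows "finite (point_mod_pi n ` braid_orbit n \<phi>)"
proof -
  obtain Q where Q: "\<forall>i\<in>{1..n}. \<phi> i - \<phi> (Suc i) = complex_of_real pi * of_rat (Q i)"
    using H by metis
  define a where "a i = fst (quotient_of (Q i))" for i
  define b where "b i = snd (quotient_of (Q i))" for i
  have bpos: "b i > 0" for i unfolding b_def by (rule quotient_of_denom_pos')
  have Qab: "Q i = of_int (a i) / of_int (b i)" for i
    unfolding a_def b_def by (rule quotient_of_div) simp
  define N where "N = (\<Prod>i\<in>{1..n}. b i)"
  have Npos: "N > 0" unfolding N_def using bpos by (simp add: prod_pos)
  have dN: "\<exists>m::int. \<phi> i - \<phi> (Suc i) = complex_of_real pi * of_int m / of_int N" if i: "i \<in> {1..n}" for i
  proof -
    have "b i dvd N" unfolding N_def using i by (intro dvd_prodI) auto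
    then obtain c where c: "N = b i * c" by (auto simp: dvd_def)
    have "b i \<noteq> 0" "c \<noteq> 0" using bpos[of i] Npos c by auto
    have "(of_rat (Q i) :: complex) = of_int (a i) / of_int (b i)"
      unfolding Qab by (simp add: of_rat_divide)
    also have "\<dots> = of_int (a i * c) / of_int N"
      using \<open>b i \<noteq> 0\<close> \<open>c \<noteq> 0\<close> unfolding c by (simp add: field_simps)
    finally show ?thesis using Q i by (intro exI[of _ "a i * c"]) simp
  qed
  define L where "L z = (\<exists>m::int. z = \<phi> 1 + complex_of_real pi * of_int m / of_int N)" for z
  have base0: "L (\<phi> (Suc j))" if "j \<le> n" for j
    using that
  proof (induction j)
    case 0 then show ?case unfolding L_def by (intro exI[of _ 0]) simp
  next
    case (Suc j)
    then obtain m1 where m1: "\<phi> (Suc j) = \<phi> 1 + complex_of_real pi * of_int m1 / of_int N"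
      unfolding L_def by auto
    obtain m2 where m2: "\<phi> (Suc j) - \<phi> (Suc (Suc j)) = complex_of_real pi * of_int m2 / of_int N"
      using dN[of "Suc j"] Suc.prems by auto
    show ?case unfolding L_def using comb_sub[OF m1 m2] by blast
  qed
  have baseL: "L (\<phi> j)" if "j \<in> {1..Suc n}" for j
    using base0[of "j - 1"] that by (cases j) auto
  have inv: "\<forall>j\<in>{1..Suc n}. L (\<psi> j)" if "\<psi> \<in> braid_orbit n \<phi>" for \<psi>
    using that
  proof (induction rule: braid_orbit.induct)
    case base then show ?case using baseL by blast
  next
    case (sig \<psi> i)
    have Li: "L (\<psi> i)" "L (\<psi> (Suc i))" using sig by auto
    have "L (2 * \<psi> i - \<psi> (Suc i))" using Li unfolding L_def using comb2 by blast
    then show ?case using sig Li unfolding braid_sigma_def by auto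
  next
    case (sig_inv \<psi> i)
    have Li: "L (\<psi> i)" "L (\<psi> (Suc i))" using sig_inv by auto
    have "L (2 * \<psi> (Suc i) - \<psi> i)" using Li unfolding L_def using comb2 by blast
    then show ?case using sig_inv Li unfolding braid_sigma_inv_def by auto
  qed
  define S where "S = (\<lambda>m. class_mod_pi (\<phi> 1 + complex_of_real pi * of_int m / of_int N)) ` {0..<N}"
  have finS: "finite S" unfolding S_def by simp
  have cls: "class_mod_pi z \<in> S" if "L z" for z
  proof -
    obtain m where m: "z = \<phi> 1 + complex_of_real pi * of_int m / of_int N" using \<open>L z\<close> L_def by auto
    have "m - m mod N = N * (m div N)" by (rule minus_mod_eq_mult_div)
    then have "(of_int m :: complex) = of_int (m mod N) + of_int N * of_int (m div N)"
      by (metis add.commute diff_add_cancel of_int_add of_int_mult)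
    then have "z - (\<phi> 1 + complex_of_real pi * of_int (m mod N) / of_int N) = complex_of_real pi * of_int (m div N)"
      using Npos unfolding m by (simp add: field_simps)
    then have "class_mod_pi z = class_mod_pi (\<phi> 1 + complex_of_real pi * of_int (m mod N) / of_int N)"
      by (rule class_eq)
    moreover have "m mod N \<in> {0..<N}" using Npos by simp
    ultimately show ?thesis unfolding S_def by blast
  qed
  have "point_mod_pi n ` braid_orbit n \<phi> \<subseteq> {f. \<forall>x. (x \<in> {1..Suc n} \<longrightarrow> f x \<in> S) \<and> (x \<notin> {1..Suc n} \<longrightarrow> f x = {})}"
  proof clarify
    fix \<psi> x assume "\<psi> \<in> braid_orbit n \<phi>"
    then have "\<forall>j\<in>{1..Suc n}. L (\<psi> j)" by (rule inv)
    then show "(x \<in> {1..Suc n} \<longrightarrow> point_mod_pi n \<psi> x \<in> S) \<and> (x \<notin> {1..Suc n} \<longrightarrow> point_mod_pi n \<psi> x = {})"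
      unfolding point_mod_pi_def using cls by auto
  qed
  moreover have "finite {f. \<forall>x. (x \<in> {1..Suc n} \<longrightarrow> f x \<in> S) \<and> (x \<notin> {1..Suc n} \<longrightarrow> f x = ({}::complex set))}"
    by (rule finite_set_of_finite_funs) (auto simp: finS)
  ultimately show ?thesis by (rule finite_subset)
qed

theorem mainTheorem2:
  fixes n :: nat and \<phi> :: "nat \<Rightarrow> complex"
  assumes "1 \<le> n"
  shows "finite (point_mod_pi n ` braid_orbit n \<phi>) \<longleftrightarrow>
         (\<forall>i\<in>{1..n}. \<exists>q::rat. \<phi> i - \<phi> (Suc i) = complex_of_real pi * of_rat q)"
  using forward backward by auto

end
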